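(* In the setting below, if $\mathbb{E}\big[|\eta(X^x_m)-\eta(x)|\big]\to 0$ as $m\to\infty$, then $x$ is a Lebesgue point for $\eta$ with respect to $\mathbb{P}_X$. This holds for any choice of nearest neighbors $X^x_m$, i.e. regardless of how ties are broken.
   Context: Let $(\mathcal{X},d)$ be a metric space with its Borel $\sigma$-algebra, let $(\Omega,\mathcal{F},\mathbb{P})$ be a probability space, and let $X,X_1,X_2,\dots$ be i.i.d. $\mathcal{X}$-valued random variables with common law $\mathbb{P}_X$. For $x\in\mathcal{X}$ and $r>0$ write $B_r=\{x':d(x,x')<r\}$, $\bar B_r=\{x':d(x,x')\le r\}$ and $S_r=\{x':d(x,x')=r\}$. The support of $\mathbb{P}_X$ is the set of $x$ such that $\mathbb{P}_X(\bar B_r(x))>0$ for all $r>0$. Fix $x$ in the support of $\mathbb{P}_X$ and a bounded measurable $\eta:\mathcal{X}\to\mathbb{R}$. For each $m\in\mathbb{N}$, a nearest neighbor of $x$ among $X_1,\dots,X_m$ is a measurable $X^x_m:\Omega\to\mathcal{X}$ with $X^x_m(\omega)\in\arg\min_{x'\in\{X_1(\omega),\dots,X_m(\omega)\}}d(x,x')$ for every $\omega\in\Omega$; fix such a sequence $(X^x_m)_{m\in\mathbb{N}}$. The point $x$ is a Lebesgue point (for $\eta$ with respect to $\mathbb{P}_X$) if $\mathbb{E}[\mathbb{I}_{\bar B_r}(X)\,|\eta(X)-\eta(x)|]/\mathbb{P}_X(\bar B_r)\to 0$ as $r\to 0^+$. *)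

theory Defs
  imports "HOL-Probability.Probability"
begin

definition in_support :: "'a::metric_space measure \<Rightarrow> 'a \<Rightarrow> bool" where
  "in_support P x \<longleftrightarrow> (\<forall>r>0. measure P (cball x r) > 0)"

definition lebesgue_point ::
    "'w measure \<Rightarrow> ('w \<Rightarrow> 'a::metric_space) \<Rightarrow> ('a \<Rightarrow> real) \<Rightarrow> 'a \<Rightarrow> bool" where
  "lebesgue_point M X \<eta> x \<longleftrightarrow>
     ((\<lambda>r. (\<integral>\<omega>. indicator (cball x r) (X \<omega>) * \<bar>\<eta> (X \<omega>) - \<eta> x\<bar> \<partial>M)
            / measure (distr M borel X) (cball x r)) \<longlongrightarrow> 0) (at_right 0)"

definition is_nearest_neighbor ::
    "'w measure \<Rightarrow> (nat \<Rightarrow> 'w \<Rightarrow> 'a::metric_space) \<Rightarrow> 'a \<Rightarrow> nat \<Rightarrow> ('w \<Rightarrow> 'a) \<Rightarrow> bool" where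
  "is_nearest_neighbor M Xs x m NN \<longleftrightarrow>
     NN \<in> measurable M borel \<and>
     (\<forall>\<omega>\<in>space M. (\<exists>i\<in>{1..m}. NN \<omega> = Xs i \<omega>) \<and>
                    (\<forall>i\<in>{1..m}. dist x (NN \<omega>) \<le> dist x (Xs i \<omega>)))"

end

theory Submission
  imports Defs
begin
lemma key_bound:
  fixes M :: "'w measure" and X :: "'w \<Rightarrow> 'a::metric_space" and Xs :: "nat \<Rightarrow> 'w \<Rightarrow> 'a"
    and \<eta> :: "'a \<Rightarrow> real" and x :: 'a and N :: "'w \<Rightarrow> 'a"
  assumes PS: "prob_space M"
    and XM: "X \<in> measurable M borel"
    and IND: "prob_space.indep_vars M (\<lambda>_. borel) (\<lambda>i. if i = 0 then X else Xs i) UNIV"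
    and XsM: "\<And>i. i \<ge> 1 \<Longrightarrow> Xs i \<in> measurable M borel"
    and D: "\<And>i. i \<ge> 1 \<Longrightarrow> distr M borel (Xs i) = distr M borel X"
    and etaM: "\<eta> \<in> borel_measurable borel"
    and K: "\<And>y. \<bar>\<eta> y\<bar> \<le> K"
    and NNm: "is_nearest_neighbor M Xs x m N"
    and m1: "m \<ge> 1"
  shows "real m * (\<integral>\<omega>. indicator (cball x r) (X \<omega>) * \<bar>\<eta> (X \<omega>) - \<eta> x\<bar> \<partial>M)
           * (1 - measure (distr M borel X) (cball x r)) ^ (m - 1)
         \<le> (\<integral>\<omega>. \<bar>\<eta> (N \<omega>) - \<eta> x\<bar> \<partial>M)"
proof -
  interpret prob_space M by (rule PS)
  define B where "B = cball x r"
  define h1 :: "'a \<Rightarrow> real" where "h1 y = indicator B y * \<bar>\<eta> y - \<eta> x\<bar>" for y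
  define h0 :: "'a \<Rightarrow> real" where "h0 y = indicator (-B) y" for y
  define H where "H i j = (if j = i then h1 else h0)" for i j :: nat
  define T where "T i \<omega> = (\<Prod>j\<in>{1..m}. H i j (Xs j \<omega>))" for i \<omega>
  define g where "g = (\<integral>\<omega>. indicator (cball x r) (X \<omega>) * \<bar>\<eta> (X \<omega>) - \<eta> x\<bar> \<partial>M)"
  define P where "P = distr M borel X"
  define p where "p = measure P (cball x r)"
  have Bb: "B \<in> sets borel" unfolding B_def by simp
  have h1m: "h1 \<in> borel_measurable borel" unfolding h1_def using etaM Bb by measurable
  have h0m: "h0 \<in> borel_measurable borel" unfolding h0_def using Bb by measurable
  have Hm: "H i j \<in> borel_measurable borel" for i j using h1m h0m by (simp add: H_def)
  have NM: "N \<in> measurable M borel" using NNm by (simp add: is_nearest_neighbor_def)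
  have fNm: "(\<lambda>\<omega>. \<bar>\<eta> (N \<omega>) - \<eta> x\<bar>) \<in> borel_measurable M" using NM etaM by measurable
  have fNi: "integrable M (\<lambda>\<omega>. \<bar>\<eta> (N \<omega>) - \<eta> x\<bar>)"
  proof (rule integrable_const_bound[where B="2*K"])
    show "AE \<omega> in M. norm \<bar>\<eta> (N \<omega>) - \<eta> x\<bar> \<le> 2 * K"
    proof (rule AE_I2)
      fix \<omega> show "norm \<bar>\<eta> (N \<omega>) - \<eta> x\<bar> \<le> 2 * K"
        using K[of "N \<omega>"] K[of x] by simp
    qed
  qed (rule fNm)
  have PP: "prob_space P" unfolding P_def by (rule prob_space_distr[OF XM])
  have ind1: "indep_vars (\<lambda>_. borel) Xs {1..m}"
  proof -
    have "indep_vars (\<lambda>_. borel) (\<lambda>i. if i = 0 then X else Xs i) {1..m}"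
      by (rule indep_vars_subset[OF IND]) auto
    moreover have "indep_vars (\<lambda>_. borel) (\<lambda>i. if i = 0 then X else Xs i) {1..m} \<longleftrightarrow> indep_vars (\<lambda>_. borel) Xs {1..m}"
      by (rule indep_vars_cong) auto
    ultimately show ?thesis by simp
  qed
  have indT: "indep_vars (\<lambda>_. borel) (\<lambda>j \<omega>. H i j (Xs j \<omega>)) {1..m}" for i
    by (rule indep_vars_compose2[OF ind1 Hm])
  have intH: "(\<integral>\<omega>. H i j (Xs j \<omega>) \<partial>M) = (if j = i then g else 1 - p)" if "j \<in> {1..m}" for i j
  proof -
    have "(\<integral>\<omega>. H i j (Xs j \<omega>) \<partial>M) = integral\<^sup>L (distr M borel (Xs j)) (H i j)"
      using that by (intro integral_distr[symmetric] XsM Hm) auto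
    also have "\<dots> = integral\<^sup>L P (H i j)" using that D by (simp add: P_def)
    also have "\<dots> = (\<integral>\<omega>. H i j (X \<omega>) \<partial>M)" unfolding P_def
      by (intro integral_distr XM Hm)
    also have "\<dots> = (if j = i then g else 1 - p)"
    proof (cases "j = i")
      case True then show ?thesis by (simp add: H_def h1_def g_def B_def)
    next
      case False
      have "(\<integral>\<omega>. H i j (X \<omega>) \<partial>M) = integral\<^sup>L P h0"
        using False unfolding P_def H_def by (simp add: integral_distr[OF XM h0m])
      also have "\<dots> = measure P (-B)" unfolding h0_def
        using Bb by (simp add: P_def)
      also have "\<dots> = 1 - p"
      proof -
        interpret Q: prob_space P by (rule PP)
        have "measure P (space P - B) = 1 - measure P B"
          by (rule Q.prob_compl) (simp add: P_def Bb)
        then show ?thesis by (simp add: P_def p_def B_def Compl_eq_Diff_UNIV)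
      qed
      finally show ?thesis using False by simp
    qed
    finally show ?thesis .
  qed
  have Hint: "integrable M (\<lambda>\<omega>. H i j (Xs j \<omega>))" if "j \<in> {1..m}" for i j
  proof (rule integrable_const_bound[where B="2*K + 1"])
    show "AE \<omega> in M. norm (H i j (Xs j \<omega>)) \<le> 2 * K + 1"
    proof (rule AE_I2)
      fix \<omega>
      have "0 \<le> K" using K[of x] by simp
      then show "norm (H i j (Xs j \<omega>)) \<le> 2 * K + 1"
        using K[of "Xs j \<omega>"] K[of x]
        by (auto simp: H_def h1_def h0_def indicator_def)
    qed
    show "(\<lambda>\<omega>. H i j (Xs j \<omega>)) \<in> borel_measurable M"
      using that XsM[of j] Hm[of i j] by (auto intro: measurable_compose)
  qed
  have intT: "integral\<^sup>L M (T i) = g * (1 - p) ^ (m - 1)" if "i \<in> {1..m}" for i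
  proof -
    have "integral\<^sup>L M (T i) = (\<Prod>j\<in>{1..m}. \<integral>\<omega>. H i j (Xs j \<omega>) \<partial>M)"
      unfolding T_def by (rule indep_vars_lebesgue_integral[OF _ indT Hint]) auto
    also have "\<dots> = (\<Prod>j\<in>{1..m}. (if j = i then g else 1 - p))"
      by (rule prod.cong) (auto simp: intH)
    also have "\<dots> = g * (\<Prod>j\<in>{1..m}-{i}. (if j = i then g else 1 - p))"
      using that by (subst prod.remove[of _ i]) auto
    also have "(\<Prod>j\<in>{1..m}-{i}. (if j = i then g else 1 - p)) = (\<Prod>j\<in>{1..m}-{i}. 1 - p)"
      by (rule prod.cong) auto
    also have "\<dots> = (1 - p) ^ (m - 1)" using that by simp
    finally show ?thesis .
  qed
  have Tint: "integrable M (T i)" for i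
    unfolding T_def by (rule indep_vars_integrable[OF _ indT Hint]) auto
  have pw: "(\<Sum>i\<in>{1..m}. T i \<omega>) \<le> \<bar>\<eta> (N \<omega>) - \<eta> x\<bar>" if \<omega>: "\<omega> \<in> space M" for \<omega>
  proof -
    from NNm \<omega> obtain k where k: "k \<in> {1..m}" "N \<omega> = Xs k \<omega>"
      and mn: "\<And>i. i \<in> {1..m} \<Longrightarrow> dist x (N \<omega>) \<le> dist x (Xs i \<omega>)"
      unfolding is_nearest_neighbor_def by blast
    show ?thesis
    proof (cases "\<exists>i\<in>{1..m}. Xs i \<omega> \<in> B \<and> (\<forall>j\<in>{1..m}. j \<noteq> i \<longrightarrow> Xs j \<omega> \<notin> B)")
      case True
      then obtain i where i: "i \<in> {1..m}" "Xs i \<omega> \<in> B" "\<And>j. j\<in>{1..m} \<Longrightarrow> j \<noteq> i \<Longrightarrow> Xs j \<omega> \<notin> B"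
        by blast
      have "Xs k \<omega> \<in> B" using mn[OF i(1)] i(2) k unfolding B_def by (simp add: dist_commute)
      then have "k = i" using i(3)[OF k(1)] by blast
      then have Ni: "N \<omega> = Xs i \<omega>" using k by simp
      have Ti: "T i \<omega> = \<bar>\<eta> (N \<omega>) - \<eta> x\<bar>"
      proof -
        have "T i \<omega> = H i i (Xs i \<omega>) * (\<Prod>j\<in>{1..m}-{i}. H i j (Xs j \<omega>))"
          unfolding T_def using i(1) by (subst prod.remove[of _ i]) auto
        also have "(\<Prod>j\<in>{1..m}-{i}. H i j (Xs j \<omega>)) = 1"
          by (rule prod.neutral) (auto simp: H_def h0_def i(3))
        finally show ?thesis using i(2) Ni by (simp add: H_def h1_def)
      qed
      have To: "T l \<omega> = 0" if "l \<in> {1..m} - {i}" for l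
        unfolding T_def using that i by (intro prod_zero bexI[of _ i]) (auto simp: H_def h0_def)
      have "(\<Sum>l\<in>{1..m}. T l \<omega>) = T i \<omega> + (\<Sum>l\<in>{1..m}-{i}. T l \<omega>)"
        using i(1) by (subst sum.remove[of _ i]) auto
      also have "(\<Sum>l\<in>{1..m}-{i}. T l \<omega>) = 0" using To by (rule sum.neutral[OF ballI])
      finally show ?thesis using Ti by simp
    next
      case False
      have "T l \<omega> = 0" if l: "l \<in> {1..m}" for l
      proof (cases "Xs l \<omega> \<in> B")
        case True
        then obtain j where "j \<in> {1..m}" "j \<noteq> l" "Xs j \<omega> \<in> B" using False l by blast
        then show ?thesis unfolding T_def
          by (intro prod_zero bexI[of _ j]) (auto simp: H_def h0_def)
      next
        case False
        then show ?thesis unfolding T_def using l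
          by (intro prod_zero bexI[of _ l]) (auto simp: H_def h1_def)
      qed
      then show ?thesis by simp
    qed
  qed
  have "(\<Sum>i\<in>{1..m}. integral\<^sup>L M (T i)) = real m * g * (1 - p) ^ (m - 1)"
    by (simp add: intT)
  moreover have "(\<Sum>i\<in>{1..m}. integral\<^sup>L M (T i)) = (\<integral>\<omega>. (\<Sum>i\<in>{1..m}. T i \<omega>) \<partial>M)"
    by (subst Bochner_Integration.integral_sum) (auto intro: Tint)
  moreover have "(\<integral>\<omega>. (\<Sum>i\<in>{1..m}. T i \<omega>) \<partial>M) \<le> (\<integral>\<omega>. \<bar>\<eta> (N \<omega>) - \<eta> x\<bar> \<partial>M)"
    by (rule integral_mono[OF _ fNi pw]) (auto intro: Tint)
  ultimately show ?thesis by (simp add: g_def p_def P_def)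
qed

lemma pow_lower:
  fixes q :: real assumes q: "0 < q" "q \<le> 1/2" and k: "real k * q \<le> 1"
  shows "exp (-2) \<le> (1 - q) ^ k"
proof -
  have l: "- q - 2 * q\<^sup>2 \<le> ln (1 - q)" using q by (intro ln_one_minus_pos_lower_bound) auto
  have "2 * q\<^sup>2 \<le> q" using q by (simp add: power2_eq_square)
  with l have l2: "-2 * q \<le> ln (1 - q)" by simp
  have "-2 \<le> real k * (-2 * q)" using k by simp
  also have "\<dots> \<le> real k * ln (1 - q)" using l2 by (intro mult_left_mono) auto
  finally have "exp (-2) \<le> exp (real k * ln (1 - q))" by simp
  also have "\<dots> = (1 - q) ^ k" using q by (simp add: exp_of_nat_mult)
  finally show ?thesis .
qed

theorem mainTheorem1:
  fixes M :: "'w measure" and X :: "'w \<Rightarrow> 'a::metric_space" and Xs :: "nat \<Rightarrow> 'w \<Rightarrow> 'a"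
    and \<eta> :: "'a \<Rightarrow> real" and x :: 'a and NN :: "nat \<Rightarrow> 'w \<Rightarrow> 'a"
  assumes "prob_space M"
    and "X \<in> measurable M borel"
    and "prob_space.indep_vars M (\<lambda>_. borel) (\<lambda>i. if i = 0 then X else Xs i) UNIV"
    and "\<And>i. i \<ge> 1 \<Longrightarrow> Xs i \<in> measurable M borel"
    and "\<And>i. i \<ge> 1 \<Longrightarrow> distr M borel (Xs i) = distr M borel X"
    and "in_support (distr M borel X) x"
    and "\<eta> \<in> borel_measurable borel"
    and "bounded (range \<eta>)"
    and "\<And>m. m \<ge> 1 \<Longrightarrow> is_nearest_neighbor M Xs x m (NN m)"
    and "(\<lambda>m. \<integral>\<omega>. \<bar>\<eta> (NN m \<omega>) - \<eta> x\<bar> \<partial>M) \<longlonglongrightarrow> 0"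
  shows "lebesgue_point M X \<eta> x"
proof -
  note PS = assms(1) and XM = assms(2) and IND = assms(3) and XsM = assms(4) and D = assms(5)
    and SUP = assms(6) and etaM = assms(7) and BD = assms(8) and NNa = assms(9) and LIM = assms(10)
  interpret prob_space M by (rule PS)
  define P where "P = distr M borel X"
  interpret Q: prob_space P unfolding P_def by (rule prob_space_distr[OF XM])
  obtain K where K: "\<And>y. \<bar>\<eta> y\<bar> \<le> K" using BD unfolding bounded_iff by auto
  have K0: "0 \<le> K" using K[of x] by simp
  define p where "p r = measure P (cball x r)" for r
  define g where "g r = (\<integral>\<omega>. indicator (cball x r) (X \<omega>) * \<bar>\<eta> (X \<omega>) - \<eta> x\<bar> \<partial>M)" for r
  define E where "E m = (\<integral>\<omega>. \<bar>\<eta> (NN m \<omega>) - \<eta> x\<bar> \<partial>M)" for m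
  define p0 where "p0 = measure P {x}"
  have sP: "space P = UNIV" "sets P = sets borel" by (auto simp: P_def)
  have ppos: "0 < p r" if "0 < r" for r
    using SUP that unfolding in_support_def p_def P_def by auto
  have p0le: "p0 \<le> p r" if "0 < r" for r
    unfolding p0_def p_def using that by (intro Q.finite_measure_mono) (auto simp: sP)
  have p0nn: "0 \<le> p0" unfolding p0_def by simp
  have keyb: "real m * g r * (1 - p r) ^ (m - 1) \<le> E m" if "m \<ge> 1" for m r
    unfolding g_def p_def E_def P_def
    by (rule key_bound[OF PS XM IND XsM D etaM K NNa[OF that] that])
  have hm: "(\<lambda>y. indicator (cball x r) y * \<bar>\<eta> y - \<eta> x\<bar> :: real) \<in> borel_measurable borel" for r
  proof -
    have "cball x r \<in> sets borel" by simp
    then show ?thesis using etaM by measurable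
  qed
  have gP: "g r = (\<integral>y. indicator (cball x r) y * \<bar>\<eta> y - \<eta> x\<bar> \<partial>P)" for r
    unfolding g_def P_def by (subst integral_distr[OF XM hm]) (auto)
  have g0: "0 \<le> g r" for r unfolding g_def by (intro integral_nonneg_AE) auto
  have gle: "g r \<le> 2 * K * (p r - p0)" if r: "0 < r" for r
  proof -
    have "g r \<le> (\<integral>y. 2 * K * indicator (cball x r - {x}) y \<partial>P)"
      unfolding gP
    proof (rule integral_mono)
      show "integrable P (\<lambda>y. indicator (cball x r) y * \<bar>\<eta> y - \<eta> x\<bar>)"
      proof (rule Q.integrable_const_bound[where B="2*K"])
        show "AE y in P. norm (indicator (cball x r) y * \<bar>\<eta> y - \<eta> x\<bar>) \<le> 2 * K"
        proof (rule AE_I2)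
          fix y show "norm (indicator (cball x r) y * \<bar>\<eta> y - \<eta> x\<bar>) \<le> 2 * K"
            using K[of y] K[of x] by (auto simp: indicator_def)
        qed
        show "(\<lambda>y. indicator (cball x r) y * \<bar>\<eta> y - \<eta> x\<bar>) \<in> borel_measurable P"
          using hm unfolding P_def by simp
      qed
      show "integrable P (\<lambda>y. 2 * K * indicator (cball x r - {x}) y)"
        by (intro integrable_mult_right integrable_real_indicator) (auto simp: sP Q.emeasure_finite less_top[symmetric])
      fix y show "indicator (cball x r) y * \<bar>\<eta> y - \<eta> x\<bar> \<le> 2 * K * indicator (cball x r - {x}) y"
        using K[of y] K[of x] by (auto simp: indicator_def)
    qed
    also have "\<dots> = 2 * K * measure P (cball x r - {x})" by (simp add: Q.emeasure_finite less_top[symmetric] sP)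
    also have "measure P (cball x r - {x}) = p r - p0"
      unfolding p_def p0_def using r by (intro Q.finite_measure_Diff) (auto simp: sP)
    finally show ?thesis .
  qed
  have pl: "(p \<longlongrightarrow> p0) (at_right 0)"
  proof (rule order_tendstoI)
    fix a assume "a < p0"
    then show "eventually (\<lambda>r. a < p r) (at_right 0)"
      unfolding eventually_at_right_field using p0le
      by (intro exI[of _ 1]) (auto intro: less_le_trans)
  next
    fix b assume b: "p0 < b"
    define S where "S n = cball x (1 / Suc n)" for n :: nat
    have "(\<lambda>n. measure P (S n)) \<longlonglongrightarrow> measure P (\<Inter>n. S n)"
    proof (rule Q.finite_Lim_measure_decseq)
      show "range S \<subseteq> sets P" by (auto simp: S_def sP)
      show "decseq S" unfolding decseq_def S_def
      proof (intro allI impI subsetI)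
        fix m n :: nat and y assume mn: "m \<le> n" and y: "y \<in> cball x (1 / real (Suc n))"
        have "1 / real (Suc n) \<le> 1 / real (Suc m)" using mn by (intro frac_le) auto
        then show "y \<in> cball x (1 / real (Suc m))" using y by auto
      qed
    qed
    also have "(\<Inter>n. S n) = {x}"
    proof
      show "(\<Inter>n. S n) \<subseteq> {x}"
      proof
        fix y assume y: "y \<in> (\<Inter>n. S n)"
        show "y \<in> {x}"
        proof (rule ccontr)
          assume "y \<notin> {x}"
          then have "0 < dist x y" by simp
          then obtain n where n: "inverse (real (Suc n)) < dist x y" using reals_Archimedean by blast
          have "y \<in> S n" using y by blast
          then show False using n by (simp add: S_def field_simps)
        qed
      qed
      show "{x} \<subseteq> (\<Inter>n. S n)" by (auto simp: S_def)
    qed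
    finally have "(\<lambda>n. measure P (S n)) \<longlonglongrightarrow> p0" by (simp add: p0_def)
    from order_tendstoD(2)[OF this b] obtain n where n: "measure P (S n) < b"
      by (auto simp: eventually_sequentially)
    show "eventually (\<lambda>r. p r < b) (at_right 0)"
      unfolding eventually_at_right_field
    proof (intro exI[of _ "1 / Suc n"] conjI allI impI)
      show "(0::real) < 1 / Suc n" by simp
      fix y :: real assume y: "0 < y" "y < 1 / Suc n"
      have "p y \<le> measure P (S n)" unfolding p_def S_def using y
        by (intro Q.finite_measure_mono) (auto simp: sP intro!: subset_cball)
      then show "p y < b" using n by simp
    qed
  qed
  have evpos: "eventually (\<lambda>r. 0 < r) (at_right (0::real))"
    unfolding eventually_at_right_field by (intro exI[of _ 1]) auto
  have goal: "((\<lambda>r. g r / p r) \<longlongrightarrow> 0) (at_right 0)"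
  proof (cases "p0 = 0")
    case False
    then have p0p: "0 < p0" using p0nn by simp
    show ?thesis
    proof (rule tendsto_sandwich[of "\<lambda>_. 0" _ _ "\<lambda>r. 2 * K * (p r - p0) / p0"])
      show "eventually (\<lambda>r. 0 \<le> g r / p r) (at_right 0)"
        using g0 by (intro always_eventually allI divide_nonneg_nonneg) (auto simp: p_def)
      show "eventually (\<lambda>r. g r / p r \<le> 2 * K * (p r - p0) / p0) (at_right 0)"
        using evpos
      proof eventually_elim
        case (elim r)
        have "g r / p r \<le> g r / p0"
          using g0[of r] p0p p0le[OF elim] by (intro divide_left_mono) auto
        also have "\<dots> \<le> 2 * K * (p r - p0) / p0"
          using gle[OF elim] p0p by (intro divide_right_mono) auto
        finally show ?case .
      qed
      show "((\<lambda>_. 0::real) \<longlongrightarrow> 0) (at_right 0)" by simp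
      have "((\<lambda>r. 2 * K * (p r - p0) / p0) \<longlongrightarrow> 2 * K * (p0 - p0) / p0) (at_right 0)"
        by (intro tendsto_intros pl) (use p0p in simp)
      then show "((\<lambda>r. 2 * K * (p r - p0) / p0) \<longlongrightarrow> 0) (at_right 0)" by simp
    qed
  next
    case True
    then have pz: "(p \<longlongrightarrow> 0) (at_right 0)" using pl by simp
    define mm where "mm r = nat \<lfloor>inverse (p r)\<rfloor>" for r
    have inv: "filterlim (\<lambda>r. inverse (p r)) at_top (at_right 0)"
      by (rule filterlim_inverse_at_top[OF pz]) (use evpos in \<open>auto elim: eventually_mono intro: ppos\<close>)
    have mmlim: "filterlim mm at_top (at_right 0)"
      unfolding mm_def
      by (rule filterlim_compose[OF filterlim_nat_sequentially filterlim_compose[OF filterlim_floor_sequentially inv]])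
    have Elim: "((\<lambda>r. E (mm r)) \<longlongrightarrow> 0) (at_right 0)"
      using filterlim_compose[OF LIM mmlim] unfolding E_def by (simp add: o_def)
    have evh: "eventually (\<lambda>r. p r < 1/2) (at_right 0)"
      using order_tendstoD(2)[OF pz, of "1/2"] by simp
    show ?thesis
    proof (rule tendsto_sandwich[of "\<lambda>_. 0" _ _ "\<lambda>r. 2 * exp 2 * E (mm r)"])
      show "eventually (\<lambda>r. 0 \<le> g r / p r) (at_right 0)"
        using g0 by (intro always_eventually allI divide_nonneg_nonneg) (auto simp: p_def)
      show "eventually (\<lambda>r. g r / p r \<le> 2 * exp 2 * E (mm r)) (at_right 0)"
        using evpos evh
      proof eventually_elim
        case (elim r)
        define q where "q = p r"
        define k where "k = mm r"
        have q: "0 < q" "q \<le> 1/2" using elim ppos by (auto simp: q_def)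
        have iq: "2 \<le> inverse q" using q by (simp add: field_simps)
        have kr: "real k = of_int \<lfloor>inverse q\<rfloor>" unfolding k_def mm_def q_def[symmetric]
          using iq q by (subst of_nat_nat) auto
        have k1: "real k \<le> inverse q" "inverse q < real k + 1" unfolding kr by linarith+
        have k2: "k \<ge> 1" using k1 iq by linarith
        have kq: "real (k - 1) * q \<le> 1"
        proof -
          have "real (k - 1) * q \<le> real k * q" using q by (intro mult_right_mono) auto
          also have "\<dots> \<le> inverse q * q" using k1 q by (intro mult_right_mono) auto
          finally show ?thesis using q by simp
        qed
        have pw: "exp (-2) \<le> (1 - q) ^ (k - 1)" by (rule pow_lower[OF q kq])
        have kb: "real k * g r * (1 - q) ^ (k - 1) \<le> E k" unfolding q_def by (rule keyb[OF k2])
        have "g r / q = g r * inverse q" by (simp add: field_simps)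
        also have "\<dots> \<le> g r * (2 * real k)"
          using k1 iq g0[of r] by (intro mult_left_mono) auto
        also have "\<dots> = 2 * exp 2 * (real k * g r * exp (-2))"
          by (simp add: exp_minus field_simps)
        also have "\<dots> \<le> 2 * exp 2 * (real k * g r * (1 - q) ^ (k - 1))"
          using pw g0[of r] by (intro mult_left_mono) auto
        also have "\<dots> \<le> 2 * exp 2 * E k" using kb by simp
        finally show ?case by (simp add: q_def k_def)
      qed
      show "((\<lambda>_. 0::real) \<longlongrightarrow> 0) (at_right 0)" by simp
      show "((\<lambda>r. 2 * exp 2 * E (mm r)) \<longlongrightarrow> 0) (at_right 0)"
        using tendsto_mult_right_zero[OF Elim, of "2 * exp 2"] by (simp add: mult.commute)
    qed
  qed
  show ?thesis unfolding lebesgue_point_def using goal by (simp add: g_def p_def P_def)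
qed

end
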